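(* Let $r\geq 1$ be an integer. For $n\geq 0$ write $\prod_{j=0}^{n-1}\left(1+x^{2^j}\right)^3=\sum_{k\geq 0}c_k(n)x^k$ and let $u(n)=\sum_{k\geq 0}c_k(n)^r$. Then there exist rational constants $c_0,\dots,c_r$ (depending on $r$) such that $$u(n)=\sum_{i=0}^{r}c_i\,2^{(2i+1)n}\quad\text{for all } n\geq 0.$$ *)

theory Defs
  imports "HOL-Computational_Algebra.Polynomial"
begin

definition cube_poly :: "nat \<Rightarrow> int poly" where
  "cube_poly n = (\<Prod>j<n. (1 + monom 1 (2 ^ j)) ^ 3)"

definition ccoef :: "nat \<Rightarrow> nat \<Rightarrow> int" where
  "ccoef k n = coeff (cube_poly n) k"

text \<open>u(n) = sum over k >= 0 of c_k(n)^r; coefficients vanish beyond the degree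
  and r >= 1, so summing up to the degree gives the full sum.\<close>
definition u :: "nat \<Rightarrow> nat \<Rightarrow> int" where
  "u r n = (\<Sum>k\<le>degree (cube_poly n). ccoef k n ^ r)"

end

theory Submission
  imports Defs
begin

lemma sum_split_add: "(\<Sum>k<a+b. f k) = (\<Sum>k<a. f k) + (\<Sum>k<b. f (a+k))"
  for f :: "nat \<Rightarrow> 'a::comm_monoid_add"
  by (induction b) (simp_all add: add.assoc)

lemma faulhaber_monom:
  "\<exists>S::rat poly. degree S \<le> d + 1 \<and> (\<forall>x. poly S (x+1) - poly S x = x ^ d)"
proof (induction d rule: less_induct)
  case (less d)
  then have "\<forall>k. \<exists>S::rat poly. k < d \<longrightarrow> degree S \<le> k + 1 \<and> (\<forall>x. poly S (x+1) - poly S x = x ^ k)"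
    by blast
  then have "\<exists>SS. \<forall>k. k < d \<longrightarrow> degree (SS k :: rat poly) \<le> k + 1 \<and> (\<forall>x. poly (SS k) (x+1) - poly (SS k) x = x ^ k)"
    by (rule choice)
  then obtain SS :: "nat \<Rightarrow> rat poly" where SS: "\<And>k. k < d \<Longrightarrow> degree (SS k) \<le> k + 1 \<and> (\<forall>x. poly (SS k) (x+1) - poly (SS k) x = x ^ k)"
    by blast
  define S where "S = smult (1 / of_nat (d+1)) (monom 1 (d+1) - (\<Sum>k<d. smult (of_nat ((d+1) choose k)) (SS k)))"
  have "degree S \<le> d + 1"
    unfolding S_def
    apply (rule order.trans[OF degree_smult_le])
    apply (rule degree_diff_le)
    apply (simp add: degree_monom_eq)
    apply (rule degree_sum_le, simp)
    apply (rule order.trans[OF degree_smult_le])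
    using SS by fastforce
  moreover have "poly S (x+1) - poly S x = x ^ d" for x
  proof -
    have b: "(x+1)^(d+1) = (\<Sum>k\<le>d+1. of_nat ((d+1) choose k) * x^k)"
      using binomial_ring[of x 1 "d+1"] by simp
    also have "\<dots> = (\<Sum>k<d. of_nat ((d+1) choose k) * x^k) + of_nat (d+1) * x^d + x^(d+1)"
      by (simp add: lessThan_Suc_atMost[symmetric])
    finally have b2: "(x+1)^(d+1) = (\<Sum>k<d. of_nat ((d+1) choose k) * x^k) + of_nat (d+1) * x^d + x^(d+1)" .
    have "poly S (x+1) - poly S x = (1 / of_nat (d+1)) * (((x+1)^(d+1) - x^(d+1)) -
        (\<Sum>k<d. of_nat ((d+1) choose k) * (poly (SS k) (x+1) - poly (SS k) x)))"
      unfolding S_def by (simp add: poly_sum poly_monom algebra_simps sum_subtractf)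
    also have "(\<Sum>k<d. of_nat ((d+1) choose k) * (poly (SS k) (x+1) - poly (SS k) x)) =
        (\<Sum>k<d. of_nat ((d+1) choose k) * x^k)"
      using SS by (intro sum.cong) auto
    also have "((x+1)^(d+1) - x^(d+1)) - (\<Sum>k<d. of_nat ((d+1) choose k) * x^k) = of_nat (d+1) * x^d"
      using b2 by simp
    finally show ?thesis by (simp del: of_nat_add of_nat_Suc)
  qed
  ultimately show ?case by blast
qed

lemma faulhaber:
  fixes p :: "rat poly"
  shows "\<exists>S. degree S \<le> degree p + 1 \<and> (\<forall>x. poly S (x+1) - poly S x = poly p x)"
proof -
  have "\<forall>d. \<exists>S::rat poly. degree S \<le> d + 1 \<and> (\<forall>x. poly S (x+1) - poly S x = x ^ d)"
    using faulhaber_monom by blast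
  then have "\<exists>SS. \<forall>d. degree (SS d :: rat poly) \<le> d + 1 \<and> (\<forall>x. poly (SS d) (x+1) - poly (SS d) x = x ^ d)"
    by (rule choice)
  then obtain SS :: "nat \<Rightarrow> rat poly" where SS: "\<And>d. degree (SS d) \<le> d + 1 \<and> (\<forall>x. poly (SS d) (x+1) - poly (SS d) x = x ^ d)"
    by blast
  define S where "S = (\<Sum>k\<le>degree p. smult (coeff p k) (SS k))"
  have "degree S \<le> degree p + 1"
    unfolding S_def
    apply (rule degree_sum_le, simp)
    apply (rule order.trans[OF degree_smult_le])
    using SS by (meson add_le_mono1 atMost_iff order_trans)
  moreover have "poly S (x+1) - poly S x = poly p x" for x
    unfolding S_def poly_altdef[of p x]
    by (simp add: poly_sum sum_subtractf[symmetric] right_diff_distrib[symmetric] SS)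
  ultimately show ?thesis by blast
qed

lemma centered_step:
  fixes f :: "rat \<Rightarrow> 'a::comm_monoid_add"
  shows "(\<Sum>i<N+2. f (2 * of_nat i - of_nat (N+2) + 1)) =
     f (- (of_nat N + 1)) + (\<Sum>i<N. f (2 * of_nat i - of_nat N + 1)) + f (of_nat N + 1)"
proof -
  have "(\<Sum>i<N+2. f (2 * of_nat i - of_nat (N+2) + 1)) =
      (\<Sum>i<Suc N. f (2 * of_nat i - of_nat (N+2) + 1)) + f (of_nat N + 1)"
    by (simp add: algebra_simps)
  also have "(\<Sum>i<Suc N. f (2 * of_nat i - of_nat (N+2) + 1)) =
      f (- (of_nat N + 1)) + (\<Sum>i<N. f (2 * of_nat i - of_nat N + 1))"
    by (subst sum.lessThan_Suc_shift) (simp add: algebra_simps)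
  finally show ?thesis .
qed

lemma poly_zero_from_infinite:
  fixes R :: "rat poly"
  assumes "\<And>n::nat. poly R (2 * of_nat n) = 0"
  shows "R = 0"
proof (rule ccontr)
  assume "R \<noteq> 0"
  then have "finite {x. poly R x = 0}" by (rule poly_roots_finite)
  moreover have "range (\<lambda>n::nat. 2 * (of_nat n :: rat)) \<subseteq> {x. poly R x = 0}"
    using assms by auto
  moreover have "infinite (range (\<lambda>n::nat. 2 * (of_nat n :: rat)))"
    by (rule range_inj_infinite) (simp add: inj_on_def)
  ultimately show False using finite_subset by blast
qed

definition oddrep :: "nat \<Rightarrow> (nat \<Rightarrow> rat) \<Rightarrow> bool" where
  "oddrep d F \<longleftrightarrow> (\<exists>G::rat poly. degree G \<le> 2*d+1 \<and> (\<forall>x. poly G (-x) = - poly G x)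
      \<and> (\<forall>N. F N = poly G (of_nat N)))"

lemma centered:
  fixes p :: "rat poly"
  assumes ev: "\<And>x. poly p (-x) = poly p x" and dp: "degree p \<le> 2*d"
  shows "oddrep d (\<lambda>N. \<Sum>i<N. poly p (2 * of_nat i - of_nat N + 1))"
proof -
  define q where "q = pcompose (smult 2 p) [:1,2:]"
  obtain S where S: "degree S \<le> degree q + 1" "\<And>x. poly S (x+1) - poly S x = poly q x"
    using faulhaber by blast
  define G0 where "G0 = pcompose S [:0,1/2:]"
  define G where "G = G0 - [:poly G0 0:]"
  have pG: "poly G x = poly S (x/2) - poly S 0" for x
    unfolding G_def G0_def by (simp add: poly_pcompose)
  have dq: "degree q \<le> degree p"
    unfolding q_def by (simp add: degree_pcompose)
  have dG: "degree G \<le> 2*d+1"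
  proof -
    have "degree G0 \<le> degree S"
      unfolding G0_def using degree_pcompose_le[of S "[:0,1/2:]"] by simp
    then have "degree G0 \<le> 2*d+1" using S(1) dq dp by linarith
    then show ?thesis unfolding G_def
      by (intro degree_diff_le) auto
  qed
  have stp: "poly G (x+2) - poly G x = 2 * poly p (x+1)" for x
  proof -
    have "poly G (x+2) - poly G x = poly S (x/2 + 1) - poly S (x/2)"
      by (simp add: pG add_divide_distrib)
    also have "\<dots> = poly q (x/2)" by (rule S(2))
    also have "\<dots> = 2 * poly p (x+1)" unfolding q_def by (simp add: poly_pcompose add.commute)
    finally show ?thesis .
  qed
  have G0': "poly G 0 = 0" by (simp add: pG)
  define R where "R = G + pcompose G [:0,-1:]"
  have pR: "poly R x = poly G x + poly G (-x)" for x
    unfolding R_def by (simp add: poly_pcompose)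
  have "poly R (2 * of_nat n) = 0" for n
  proof (induction n)
    case 0 then show ?case by (simp add: pR G0')
  next
    case (Suc n)
    have a: "poly G (2 * of_nat n + 2) = poly G (2 * of_nat n) + 2 * poly p (2 * of_nat n + 1)"
      using stp[of "2 * of_nat n"] by simp
    have b0: "poly G (- (2 * of_nat n) - 2 + 2) - poly G (- (2 * of_nat n) - 2) = 2 * poly p (- (2 * of_nat n) - 2 + 1)"
      by (rule stp)
    have e1: "- (2 * of_nat n) - 2 + 2 = - (2 * of_nat n :: rat)" by simp
    have e2: "- (2 * of_nat n) - 2 + 1 = - (2 * of_nat n) - (1 :: rat)" by simp
    have b: "poly G (- (2 * of_nat n)) = poly G (- (2 * of_nat n) - 2) + 2 * poly p (- (2 * of_nat n) - 1)"
      using b0 unfolding e1 e2 by linarith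
    have e3: "- (2 * of_nat n) - 1 = - (2 * of_nat n + (1::rat))" by simp
    have c: "poly p (- (2 * of_nat n) - 1) = poly p (2 * of_nat n + 1)"
      unfolding e3 by (rule ev)
    have e4: "2 * of_nat (Suc n) = 2 * of_nat n + (2::rat)" by simp
    have e5: "- (2 * of_nat n + 2) = - (2 * of_nat n) - (2::rat)" by simp
    have "poly R (2 * of_nat (Suc n)) = poly G (2 * of_nat n + 2) + poly G (- (2 * of_nat n) - 2)"
      unfolding pR e4 e5 by simp
    also have "\<dots> = poly R (2 * of_nat n)" unfolding pR using a b c by linarith
    finally show ?case using Suc by simp
  qed
  then have "R = 0" by (rule poly_zero_from_infinite)
  then have oddG: "poly G (-x) = - poly G x" for x
    using pR[of x] by (simp add: eq_neg_iff_add_eq_0 add.commute)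
  have G1: "poly G 1 = poly p 0"
    using stp[of "-1"] oddG[of 1] by simp
  have "(\<Sum>i<N. poly p (2 * of_nat i - of_nat N + 1)) = poly G (of_nat N)" for N
  proof (induction N rule: nat_induct2)
    case 0 then show ?case by (simp add: G0')
  next
    case 1 then show ?case by (simp add: G1)
  next
    case (step n)
    have c: "poly p (- (of_nat n + 1)) = poly p (of_nat n + 1)" by (rule ev)
    show ?case
      unfolding centered_step step c
      using stp[of "of_nat n"] by (simp add: algebra_simps)
  qed
  then show ?thesis unfolding oddrep_def using dG oddG by metis
qed

lemma oddrep_zero: "oddrep d (\<lambda>N. 0)"
  unfolding oddrep_def by (rule exI[of _ 0]) simp

lemma oddrep_add: "oddrep d F \<Longrightarrow> oddrep d H \<Longrightarrow> oddrep d (\<lambda>N. F N + H N)"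
  unfolding oddrep_def
  apply (elim exE conjE)
  subgoal for G1 G2
    apply (rule exI[of _ "G1 + G2"])
    by (auto intro: degree_add_le)
  done

lemma oddrep_smult: "oddrep d F \<Longrightarrow> oddrep d (\<lambda>N. c * F N)"
  unfolding oddrep_def
  apply (elim exE conjE)
  subgoal for G
    apply (rule exI[of _ "smult c G"])
    by (auto intro: order.trans[OF degree_smult_le])
  done

lemma oddrep_mono: "d \<le> d' \<Longrightarrow> oddrep d F \<Longrightarrow> oddrep d' F"
  unfolding oddrep_def by (meson add_le_mono1 mult_le_mono2 order_trans)

lemma oddrep_sum: "finite I \<Longrightarrow> (\<And>i. i \<in> I \<Longrightarrow> oddrep d (F i)) \<Longrightarrow> oddrep d (\<lambda>N. \<Sum>i\<in>I. F i N)"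
  by (induction I rule: finite_induct) (auto simp: oddrep_zero oddrep_add)

lemma oddrep_mult_even:
  fixes E :: "rat poly"
  assumes "\<And>x. poly E (-x) = poly E x" "degree E \<le> 2*a" "oddrep b F"
  shows "oddrep (a+b) (\<lambda>N. poly E (of_nat N) * F N)"
  using assms(3) unfolding oddrep_def
  apply (elim exE conjE)
  subgoal for G
    apply (rule exI[of _ "E * G"])
    using assms(1,2) by (auto intro!: order.trans[OF degree_mult_le])
  done

lemma oddrep_double: "oddrep d F \<Longrightarrow> oddrep d (\<lambda>N. F (2*N))"
  unfolding oddrep_def
  apply (elim exE conjE)
  subgoal for G
    apply (rule exI[of _ "pcompose G [:0,2:]"])
    using degree_pcompose_le[of G "[:0,2:]"] by (auto simp: poly_pcompose mult.commute)
  done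

lemma odd_sum_extract:
  fixes a :: "nat \<Rightarrow> rat"
  shows "(\<Sum>k\<le>2*d+1. a k * (x^k - (-x)^k) / 2) = (\<Sum>i\<le>d. a (2*i+1) * x^(2*i+1))"
proof (induction d)
  case 0 then show ?case by (simp add: numeral_2_eq_2)
next
  case (Suc d)
  have e: "2 * Suc d + 1 = Suc (Suc (2*d+1))" by simp
  show ?case unfolding e sum.atMost_Suc Suc
    by (simp add: power_minus_odd power_minus_even)
qed

lemma oddrep_final: "oddrep d F \<Longrightarrow> \<exists>c. \<forall>N. F N = (\<Sum>i\<le>d. c i * of_nat N ^ (2*i+1))"
proof -
  assume "oddrep d F"
  then obtain G where G: "degree G \<le> 2*d+1" "\<And>x. poly G (-x) = - poly G x" "\<And>N. F N = poly G (of_nat N)"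
    unfolding oddrep_def by blast
  have pg: "poly G x = (\<Sum>k\<le>2*d+1. coeff G k * x^k)" for x
  proof -
    have "poly G x = poly (\<Sum>i\<le>2*d+1. monom (coeff G i) i) x"
      using poly_as_sum_of_monoms'[OF G(1)] by simp
    then show ?thesis by (simp add: poly_sum poly_monom)
  qed
  have "poly G x = (\<Sum>i\<le>d. coeff G (2*i+1) * x^(2*i+1))" for x
  proof -
    have "poly G x = (poly G x - poly G (-x)) / 2" using G(2)[of x] by simp
    also have "\<dots> = (\<Sum>k\<le>2*d+1. coeff G k * (x^k - (-x)^k) / 2)"
      unfolding pg[of x] pg[of "-x"]
      by (simp add: sum_divide_distrib[symmetric] sum_subtractf[symmetric] right_diff_distrib)
    finally show ?thesis using odd_sum_extract by simp
  qed
  then show ?thesis using G(3) by (intro exI[of _ "\<lambda>i. coeff G (2*i+1)"]) simp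
qed

lemma one_minus_monom_cube:
  "(1 - monom (1::int) m) ^ 3 = 1 - monom 3 m + monom 3 (2*m) - monom 1 (3*m)"
proof -
  have "(1 - monom (1::int) m) ^ 3 = 1 - 3 * monom 1 m + 3 * (monom 1 m * monom 1 m) - monom 1 m * monom 1 m * monom 1 m"
    by (simp add: power3_eq_cube algebra_simps)
  also have "\<dots> = 1 - monom 3 m + monom 3 (2*m) - monom 1 (3*m)"
  proof -
    have three: "3 * m = m + (m + m)" by simp
    show ?thesis by (simp add: mult_monom mult_2 numeral_mult_conv_smult smult_monom add.assoc three)
  qed
  finally show ?thesis .
qed

lemma geom_prod: "(\<Prod>j<n. (1 + monom 1 (2^j)) :: int poly) = (\<Sum>k<2^n. monom 1 k)"
proof (induction n)
  case 0 then show ?case by (simp add: one_poly_def monom_0)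
next
  case (Suc n)
  have "(\<Prod>j<Suc n. (1 + monom 1 (2^j)) :: int poly) = (\<Sum>k<2^n. monom 1 k) * (1 + monom 1 (2^n))"
    by (simp add: Suc)
  also have "\<dots> = (\<Sum>k<2^n. monom 1 k) + (\<Sum>k<2^n. monom 1 (2^n + k))"
    by (simp add: distrib_left sum_distrib_right mult_monom add.commute)
  also have "\<dots> = (\<Sum>k<2^n + 2^n. monom 1 k)" by (rule sum_split_add[symmetric])
  finally show ?case by (simp add: mult_2)
qed

lemma geom_mul: "(1 - monom 1 1) * (\<Sum>k<N. monom 1 k :: int poly) = 1 - monom 1 N"
proof (induction N)
  case (Suc N)
  have "(1 - monom 1 1) * (\<Sum>k<Suc N. monom 1 k :: int poly) = (1 - monom 1 1) * (\<Sum>k<N. monom 1 k) + (1 - monom 1 1) * monom 1 N"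
    by (simp add: distrib_left)
  also have "\<dots> = 1 - monom 1 N + (monom 1 N - monom 1 (Suc N))"
    unfolding Suc.IH by (simp add: left_diff_distrib mult_monom)
  finally show ?case by simp
qed simp

definition g :: "int \<Rightarrow> rat" where
  "g m = (if m < 0 then 0 else of_int ((m+1)*(m+2)) / 2)"

lemma g_poly: "m \<ge> -2 \<Longrightarrow> g m = of_int ((m+1)*(m+2)) / 2"
proof -
  assume "m \<ge> -2"
  then consider "m = -2" | "m = -1" | "m \<ge> 0" by linarith
  then show ?thesis by cases (auto simp: g_def)
qed

lemma g_neg: "m < 0 \<Longrightarrow> g m = 0" by (simp add: g_def)

lemma g_rec: "g m - 3 * g (m-1) + 3 * g (m-2) - g (m-3) = (if m = 0 then 1 else 0)"
proof -
  consider "m < 0" | "m = 0" | "m = 1" | "m = 2" | "m \<ge> 3" by linarith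
  then show ?thesis
  proof cases
    case 5
    then show ?thesis by (simp add: g_poly field_simps)
  qed (auto simp: g_def)
qed

definition H :: "nat \<Rightarrow> int \<Rightarrow> rat" where
  "H N m = g m - 3 * g (m - int N) + 3 * g (m - 2 * int N) - g (m - 3 * int N)"

definition e :: "nat \<Rightarrow> int \<Rightarrow> rat" where
  "e N m = (if m = 0 then 1 else 0) - 3 * (if m = int N then 1 else 0) + 3 * (if m = 2 * int N then 1 else 0)
     - (if m = 3 * int N then 1 else 0)"

lemma H_rec: "H N m - 3 * H N (m-1) + 3 * H N (m-2) - H N (m-3) = e N m"
proof -
  have a: "g (m - c) - 3 * g (m - c - 1) + 3 * g (m - c - 2) - g (m - c - 3) = (if m = c then 1 else 0)" for c
    using g_rec[of "m - c"] by simp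
  have "H N m - 3 * H N (m-1) + 3 * H N (m-2) - H N (m-3) =
     (g (m - 0) - 3 * g (m - 0 - 1) + 3 * g (m - 0 - 2) - g (m - 0 - 3))
     - 3 * (g (m - int N) - 3 * g (m - int N - 1) + 3 * g (m - int N - 2) - g (m - int N - 3))
     + 3 * (g (m - 2 * int N) - 3 * g (m - 2 * int N - 1) + 3 * g (m - 2 * int N - 2) - g (m - 2 * int N - 3))
     - (g (m - 3 * int N) - 3 * g (m - 3 * int N - 1) + 3 * g (m - 3 * int N - 2) - g (m - 3 * int N - 3))"
    unfolding H_def by (simp add: algebra_simps)
  also have "\<dots> = e N m" unfolding a e_def by simp
  finally show ?thesis .
qed

lemma H_neg: "m < 0 \<Longrightarrow> H N m = 0"
  by (simp add: H_def g_neg)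

definition sN :: "nat \<Rightarrow> int poly" where "sN N = (\<Sum>k<N. monom 1 k)"

definition Cx :: "nat \<Rightarrow> int \<Rightarrow> rat" where
  "Cx N m = (if m < 0 then 0 else of_int (coeff (sN N ^ 3) (nat m)))"

lemma cube_poly_eq: "cube_poly n = sN (2^n) ^ 3"
  unfolding cube_poly_def sN_def prod_power_distrib[symmetric] geom_prod ..

lemma Cx_rec:
  assumes "m \<ge> 0"
  shows "Cx N m - 3 * Cx N (m-1) + 3 * Cx N (m-2) - Cx N (m-3) = e N m"
proof -
  define P where "P = sN N ^ 3"
  have eq: "(1 - monom 3 1 + monom 3 (2*1) - monom 1 (3*1)) * P = 1 - monom 3 N + monom 3 (2*N) - monom 1 (3*N)"
    unfolding one_minus_monom_cube[symmetric] P_def sN_def power_mult_distrib[symmetric] geom_mul ..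
  obtain k where k: "m = int k" using assms nonneg_eq_int by blast
  have L: "coeff ((1 - monom 3 1 + monom 3 (2*1) - monom 1 (3*1)) * P) k =
      coeff P k - (if k < 1 then 0 else 3 * coeff P (k-1)) + (if k < 2 then 0 else 3 * coeff P (k-2))
      - (if k < 3 then 0 else coeff P (k-3))"
    by (simp only: distrib_right left_diff_distrib coeff_add coeff_diff coeff_monom_mult mult_1 mult_1_right)
  have R: "coeff (1 - monom 3 N + monom 3 (2*N) - monom (1::int) (3*N)) k =
      of_bool (k = 0) - (if N = k then 3 else 0) + (if 2*N = k then 3 else 0) - (if 3*N = k then 1 else 0)"
    by (simp only: coeff_add coeff_diff coeff_monom coeff_1)
  have "coeff P k - (if k < 1 then 0 else 3 * coeff P (k-1)) + (if k < 2 then 0 else 3 * coeff P (k-2))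
      - (if k < 3 then 0 else coeff P (k-3)) =
      of_bool (k = 0) - (if N = k then 3 else 0) + (if 2*N = k then 3 else 0) - (if 3*N = k then 1 else 0)"
    using eq L R by metis
  then have "of_int (coeff P k) - 3 * (if k < 1 then 0 else of_int (coeff P (k-1))) + 3 * (if k < 2 then 0 else of_int (coeff P (k-2)))
      - (if k < 3 then 0 else of_int (coeff P (k-3))) =
      (if k = 0 then 1 else 0) - 3 * (if k = N then 1 else 0) + 3 * (if k = 2*N then 1 else 0) - (if k = 3*N then (1::rat) else 0)"
    by (auto split: if_splits)
  moreover have "Cx N (m - 1) = (if k < 1 then 0 else of_int (coeff P (k-1)))"
    "Cx N (m - 2) = (if k < 2 then 0 else of_int (coeff P (k-2)))"
    "Cx N (m - 3) = (if k < 3 then 0 else of_int (coeff P (k-3)))"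
    "Cx N m = of_int (coeff P k)"
    unfolding Cx_def P_def k by (auto simp: nat_diff_distrib)
  moreover have "e N m = (if k = 0 then 1 else 0) - 3 * (if k = N then 1 else 0) + 3 * (if k = 2*N then 1 else 0) - (if k = 3*N then (1::rat) else 0)"
    unfolding e_def k by simp
  ultimately show ?thesis by simp
qed

lemma Cx_neg: "m < 0 \<Longrightarrow> Cx N m = 0" by (simp add: Cx_def)

lemma Cx_H: "Cx N m = H N m"
proof -
  have "\<forall>m. m < int K \<longrightarrow> Cx N m = H N m" for K
  proof (induction K)
    case 0 then show ?case by (auto simp: Cx_neg H_neg)
  next
    case (Suc K)
    show ?case
    proof (intro allI impI)
      fix m assume m: "m < int (Suc K)"
      show "Cx N m = H N m"
      proof (cases "m < int K")
        case True then show ?thesis using Suc by blast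
      next
        case False
        then have mK: "m = int K" using m by simp
        then have ih: "Cx N (m-1) = H N (m-1)" "Cx N (m-2) = H N (m-2)" "Cx N (m-3) = H N (m-3)"
          using Suc by auto
        have "Cx N m - 3 * Cx N (m-1) + 3 * Cx N (m-2) - Cx N (m-3) = e N m"
          using Cx_rec mK by simp
        moreover note H_rec[of N m]
        ultimately show ?thesis using ih by simp
      qed
    qed
  qed
  from this[of "nat m + 1"] show ?thesis by simp
qed

definition Tt :: "nat \<Rightarrow> rat" where "Tt j = of_nat j * (of_nat j + 1) / 2"

lemma H_A: "k < M \<Longrightarrow> H (Suc M) (int k) = Tt (Suc k)"
  unfolding H_def Tt_def by (simp add: g_poly g_neg field_simps)

lemma H_B: "i < Suc M \<Longrightarrow> H (Suc M) (int (M + i)) =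
   (3 * of_nat (Suc M)^2 + 1 - (2 * of_nat i - of_nat (Suc M) + 1)^2) / 4"
  unfolding H_def by (simp add: g_poly g_neg field_simps power2_eq_square)

lemma H_C: "j < Suc M \<Longrightarrow> H (Suc M) (int (M + Suc M + j)) = Tt (M - j)"
  unfolding H_def Tt_def by (simp add: g_poly g_neg field_simps of_nat_diff)

definition Fm :: "nat \<Rightarrow> nat \<Rightarrow> rat" where
  "Fm r N = (\<Sum>i<N. ((3 * of_nat N^2 + 1 - (2 * of_nat i - of_nat N + 1)^2) / 4) ^ r)"

lemma degree_sN: "degree (sN N) \<le> N - 1"
  unfolding sN_def
  by (rule degree_sum_le) (auto intro: order.trans[OF degree_monom_le])

lemma u_decomp:
  assumes r: "r \<ge> 1"
  shows "of_int (u r n) = 2 * (\<Sum>j<2^n. Tt j ^ r) + Fm r (2^n)"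
proof -
  obtain M where M: "2^n = Suc M" using not0_implies_Suc[of "2^n"] by auto
  define P where "P = sN (Suc M) ^ 3"
  have cp: "cube_poly n = P" unfolding P_def cube_poly_eq M ..
  have dP: "degree P < M + Suc M + Suc M"
  proof -
    have "degree P \<le> degree (sN (Suc M)) * 3" unfolding P_def by (rule degree_power_le)
    also have "\<dots> \<le> M * 3" using degree_sN[of "Suc M"] by simp
    finally show ?thesis by simp
  qed
  have cf: "of_int (coeff P k) = H (Suc M) (int k)" for k
    using Cx_H[of "Suc M" "int k"] unfolding Cx_def P_def by simp
  have "of_int (u r n) = (\<Sum>k\<le>degree P. H (Suc M) (int k) ^ r)"
    unfolding u_def ccoef_def cp by (simp add: cf[symmetric])
  also have "\<dots> = (\<Sum>k<M + Suc M + Suc M. H (Suc M) (int k) ^ r)"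
  proof (rule sum.mono_neutral_left)
    show "{..degree P} \<subseteq> {..<M + Suc M + Suc M}" using dP by auto
    show "\<forall>i\<in>{..<M + Suc M + Suc M} - {..degree P}. H (Suc M) (int i) ^ r = 0"
      using r by (auto simp: cf[symmetric] coeff_eq_0)
  qed simp
  also have "\<dots> = (\<Sum>k<M. H (Suc M) (int k) ^ r) + (\<Sum>i<Suc M. H (Suc M) (int (M + i)) ^ r)
      + (\<Sum>j<Suc M. H (Suc M) (int (M + Suc M + j)) ^ r)"
    by (simp only: sum_split_add)
  also have "(\<Sum>k<M. H (Suc M) (int k) ^ r) = (\<Sum>k<M. Tt (Suc k) ^ r)"
    by (rule sum.cong) (auto simp: H_A)
  also have "\<dots> = (\<Sum>j<Suc M. Tt j ^ r)"
  proof -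
    have "Tt 0 ^ r = 0" using r by (simp add: Tt_def)
    then show ?thesis by (simp only: sum.lessThan_Suc_shift)
  qed
  also have "(\<Sum>i<Suc M. H (Suc M) (int (M + i)) ^ r) = Fm r (Suc M)"
    unfolding Fm_def by (intro sum.cong refl) (simp only: lessThan_iff H_B)
  also have "(\<Sum>j<Suc M. H (Suc M) (int (M + Suc M + j)) ^ r) = (\<Sum>j<Suc M. Tt (Suc M - Suc j) ^ r)"
    by (intro sum.cong refl) (simp only: lessThan_iff H_C diff_Suc_Suc)
  also have "\<dots> = (\<Sum>j<Suc M. Tt j ^ r)"
    by (rule sum.nat_diff_reindex)
  finally show ?thesis unfolding M by simp
qed

lemma oddrep_cong: "oddrep d G \<Longrightarrow> (\<And>N. F N = G N) \<Longrightarrow> oddrep d F"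
proof -
  assume "oddrep d G" "\<And>N. F N = G N"
  moreover have "F = G" using calculation(2) by auto
  ultimately show ?thesis by simp
qed

lemma outer_oddrep: "oddrep r (\<lambda>N. 2 * (\<Sum>j<N. Tt j ^ r))"
proof -
  define P :: "rat poly" where "P = [:-1/8, 0, 1/8:] ^ r"
  have pP: "poly P y = ((y^2 - 1) / 8) ^ r" for y
    unfolding P_def by (simp add: poly_power power2_eq_square field_simps)
  have evP: "poly P (-x) = poly P x" for x by (simp add: pP)
  have dP: "degree P \<le> 2 * r"
    unfolding P_def using degree_power_le[of "[:-1/8, 0, 1/8:] :: rat poly" r] by simp
  have o1: "oddrep r (\<lambda>N. \<Sum>i<N. poly P (2 * of_nat i - of_nat N + 1))"
    by (rule centered[OF evP dP])
  have o2: "oddrep r (\<lambda>N. \<Sum>i<2*N. poly P (2 * of_nat i - of_nat (2*N) + 1))"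
    using oddrep_double[OF o1] by simp
  have eq: "(\<Sum>i<2*N. poly P (2 * of_nat i - of_nat (2*N) + 1)) = 2 * (\<Sum>j<N. Tt j ^ r)" for N
  proof (induction N)
    case 0 then show ?case by simp
  next
    case (Suc N)
    have t: "poly P (of_nat (2*N) + 1) = Tt N ^ r"
    proof -
      have "((of_nat (2*N) + 1)^2 - 1) / 8 = (of_nat N * (of_nat N + 1) / 2 :: rat)"
        by (simp add: power2_eq_square field_simps)
      then show ?thesis unfolding pP Tt_def by (rule arg_cong[where f="\<lambda>x. x^r"])
    qed
    have t2: "poly P (- (of_nat (2*N) + 1)) = Tt N ^ r"
      using t evP[of "of_nat (2*N) + 1"] by (simp only:)
    have "(\<Sum>i<2 * Suc N. poly P (2 * of_nat i - of_nat (2 * Suc N) + 1)) =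
        (\<Sum>i<2*N+2. poly P (2 * of_nat i - of_nat (2*N+2) + 1))" by simp
    also have "\<dots> = poly P (- (of_nat (2*N) + 1)) + (\<Sum>i<2*N. poly P (2 * of_nat i - of_nat (2*N) + 1)) + poly P (of_nat (2*N) + 1)"
      by (rule centered_step)
    finally show ?case unfolding t t2 Suc.IH by simp
  qed
  show ?thesis using oddrep_cong[OF o2] eq by metis
qed

lemma middle_oddrep: "oddrep r (Fm r)"
proof -
  define E :: "nat \<Rightarrow> rat poly" where "E k = [:1/4, 0, 3/4:] ^ k" for k
  have pE: "poly (E k) x = ((3 * x^2 + 1) / 4) ^ k" for k x
    unfolding E_def by (simp add: poly_power power2_eq_square field_simps)
  define Q :: "nat \<Rightarrow> nat \<Rightarrow> rat" where
    "Q k N = (\<Sum>i<N. poly (monom 1 (2*(r-k))) (2 * of_nat i - of_nat N + 1))" for k N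
  have oQ: "oddrep (r-k) (Q k)" for k
    unfolding Q_def
    by (rule centered) (simp_all add: poly_monom degree_monom_eq power_mult)
  have oT: "oddrep r (\<lambda>N. poly (E k) (of_nat N) * (of_nat (r choose k) * (-1/4)^(r-k) * Q k N))" if "k \<le> r" for k
  proof -
    have "oddrep (k + (r-k)) (\<lambda>N. poly (E k) (of_nat N) * (of_nat (r choose k) * (-1/4)^(r-k) * Q k N))"
      apply (rule oddrep_mult_even)
        apply (simp add: pE)
       apply (unfold E_def, rule order.trans[OF degree_power_le], simp)
      apply (rule oddrep_smult[OF oQ])
      done
    then show ?thesis using that by simp
  qed
  have "oddrep r (\<lambda>N. \<Sum>k\<le>r. poly (E k) (of_nat N) * (of_nat (r choose k) * (-1/4)^(r-k) * Q k N))"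
    by (rule oddrep_sum) (simp, rule oT, simp)
  moreover have "Fm r N = (\<Sum>k\<le>r. poly (E k) (of_nat N) * (of_nat (r choose k) * (-1/4)^(r-k) * Q k N))" for N
  proof -
    let ?a = "(3 * (of_nat N :: rat)^2 + 1) / 4"
    have "Fm r N = (\<Sum>i<N. (?a + ((-1/4) * (2 * of_nat i - of_nat N + 1)^2)) ^ r)"
      unfolding Fm_def
    proof (intro sum.cong refl)
      fix i
      have "(3 * of_nat N^2 + 1 - (2 * of_nat i - of_nat N + 1)^2) / 4 = ?a + ((-1/4) * (2 * of_nat i - of_nat N + 1)^2)"
        by (simp add: field_simps)
      then show "((3 * of_nat N^2 + 1 - (2 * of_nat i - of_nat N + 1)^2) / 4) ^ r = (?a + ((-1/4) * (2 * of_nat i - of_nat N + 1)^2)) ^ r"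
        by (rule arg_cong[where f="\<lambda>x. x^r"])
    qed
    also have "\<dots> = (\<Sum>i<N. \<Sum>k\<le>r. of_nat (r choose k) * ?a^k * ((-1/4) * (2 * of_nat i - of_nat N + 1)^2)^(r-k))"
      by (simp only: binomial_ring)
    also have "\<dots> = (\<Sum>k\<le>r. \<Sum>i<N. of_nat (r choose k) * ?a^k * ((-1/4) * (2 * of_nat i - of_nat N + 1)^2)^(r-k))"
      by (rule sum.swap)
    also have "\<dots> = (\<Sum>k\<le>r. poly (E k) (of_nat N) * (of_nat (r choose k) * (-1/4)^(r-k) * Q k N))"
    proof (intro sum.cong refl)
      fix k
      have "(\<Sum>i<N. of_nat (r choose k) * ?a^k * ((-1/4) * (2 * of_nat i - of_nat N + 1)^2)^(r-k)) =
          (\<Sum>i<N. ?a^k * (of_nat (r choose k) * (-1/4)^(r-k) * (2 * of_nat i - of_nat N + 1)^(2*(r-k))))"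
      proof (intro sum.cong refl)
        fix i
        show "of_nat (r choose k) * ?a^k * ((-1/4) * (2 * of_nat i - of_nat N + 1)^2)^(r-k) =
          ?a^k * (of_nat (r choose k) * (-1/4)^(r-k) * (2 * of_nat i - of_nat N + 1)^(2*(r-k)))"
          by (simp only: power_mult_distrib power_mult) (simp add: algebra_simps)
      qed
      also have "\<dots> = poly (E k) (of_nat N) * (of_nat (r choose k) * (-1/4)^(r-k) * Q k N)"
        unfolding Q_def pE by (simp add: sum_distrib_left poly_monom)
      finally show "(\<Sum>i<N. of_nat (r choose k) * ?a^k * ((-1/4) * (2 * of_nat i - of_nat N + 1)^2)^(r-k)) =
          poly (E k) (of_nat N) * (of_nat (r choose k) * (-1/4)^(r-k) * Q k N)" .
    qed
    finally show ?thesis .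
  qed
  ultimately show ?thesis using oddrep_cong by blast
qed

theorem theorem5p1:
  fixes r :: nat
  assumes "r \<ge> 1"
  shows "\<exists>c :: nat \<Rightarrow> rat. \<forall>n :: nat.
           of_int (u r n) = (\<Sum>i\<le>r. c i * 2 ^ ((2 * i + 1) * n))"
proof -
  have "oddrep r (\<lambda>N. 2 * (\<Sum>j<N. Tt j ^ r) + Fm r N)"
    by (rule oddrep_add[OF outer_oddrep middle_oddrep])
  then obtain c where c: "\<And>N. 2 * (\<Sum>j<N. Tt j ^ r) + Fm r N = (\<Sum>i\<le>r. c i * of_nat N ^ (2*i+1))"
    using oddrep_final by blast
  have "of_int (u r n) = (\<Sum>i\<le>r. c i * 2 ^ ((2 * i + 1) * n))" for n
  proof -
    have "of_int (u r n) = (\<Sum>i\<le>r. c i * of_nat (2^n) ^ (2*i+1))"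
      unfolding u_decomp[OF assms] c ..
    also have "\<dots> = (\<Sum>i\<le>r. c i * 2 ^ ((2 * i + 1) * n))"
    proof (intro sum.cong refl)
      fix i
      have "(of_nat (2^n) :: rat) ^ (2*i+1) = 2 ^ (n * (2*i+1))"
        by (simp only: of_nat_power of_nat_numeral power_mult)
      then show "c i * of_nat (2^n) ^ (2*i+1) = c i * 2 ^ ((2 * i + 1) * n)"
        by (simp only: mult.commute[of n])
    qed
    finally show ?thesis .
  qed
  then show ?thesis by blast
qed

end
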